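(* Let $\beta>2$ and $\ell(r)=r^\beta$ for $r\ge0$. Let $\Phi=\{x_i\}$ be a stationary Poisson point process of intensity $1$ on $\mathbb{R}^2$. For $\lambda>0$ let $e_\lambda=(\lambda,0)$ and let $\{F_{0\lambda},F_{i\lambda};i\ge1\}$ be positive i.i.d. random variables with common distribution $F$, independent of $\Phi$, satisfying $\int_{\mathbb{R}_+}p\,F(dp)<\infty$. Define $$\mathcal{I}(e_\lambda)=\sum_{x_i\in\Phi}\frac{F_{i\lambda}}{\ell(\|e_\lambda-x_i\|)},\qquad \mathrm{SIR}_{0\lambda}=\frac{F_{0\lambda}/\ell(\|e_\lambda\|)}{\mathcal{I}(e_\lambda)}.$$ Then $$\liminf_{c\to0+}\liminf_{\lambda\to\infty}\mathbb{P}\Big(\mathrm{SIR}_{0\lambda}\ge\frac{c}{\lambda^\beta}\Big)=1.$$ *)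

theory Defs
  imports "HOL-Probability.Probability"
begin

text \<open>A point process is given by an injective enumeration
  x 0, x 1, ... of its points; the point set is the range.\<close>

definition pts :: "(nat \<Rightarrow> 'w \<Rightarrow> real \<times> real) \<Rightarrow> 'w \<Rightarrow> (real \<times> real) set" where
  "pts x \<omega> = range (\<lambda>i. x i \<omega>)"

definition count_pts :: "(nat \<Rightarrow> 'w \<Rightarrow> real \<times> real) \<Rightarrow> (real \<times> real) set \<Rightarrow> 'w \<Rightarrow> nat" where
  "count_pts x B \<omega> = card (pts x \<omega> \<inter> B)"

definition poisson_pp :: "'w measure \<Rightarrow> (nat \<Rightarrow> 'w \<Rightarrow> real \<times> real) \<Rightarrow> bool" where
  "poisson_pp M x \<longleftrightarrow>
     prob_space M \<and>
     (\<forall>i. x i \<in> borel_measurable M) \<and>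
     (\<forall>\<omega>\<in>space M. inj (\<lambda>i. x i \<omega>)) \<and>
     (\<forall>\<omega>\<in>space M. \<forall>B. bounded B \<longrightarrow> finite (pts x \<omega> \<inter> B)) \<and>
     (\<forall>B\<in>sets borel. bounded B \<longrightarrow>
        count_pts x B \<in> measurable M (count_space UNIV) \<and>
        (\<forall>k. measure M {\<omega>\<in>space M. count_pts x B \<omega> = k}
               = measure lborel B ^ k / fact k * exp (- measure lborel B))) \<and>
     (\<forall>(B :: nat \<Rightarrow> (real \<times> real) set) K. finite K \<longrightarrow> disjoint_family_on B K \<longrightarrow>
        (\<forall>k\<in>K. B k \<in> sets borel \<and> bounded (B k)) \<longrightarrow>
        prob_space.indep_vars M (\<lambda>_. count_space UNIV) (\<lambda>k. count_pts x (B k)) K)"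

definition indep_rv2 :: "'w measure \<Rightarrow> 'a measure \<Rightarrow> ('w \<Rightarrow> 'a) \<Rightarrow> 'b measure \<Rightarrow> ('w \<Rightarrow> 'b) \<Rightarrow> bool" where
  "indep_rv2 M S X T Y \<longleftrightarrow> X \<in> measurable M S \<and> Y \<in> measurable M T \<and>
     (\<forall>A\<in>sets S. \<forall>B\<in>sets T.
        measure M (X -` A \<inter> Y -` B \<inter> space M)
          = measure M (X -` A \<inter> space M) * measure M (Y -` B \<inter> space M))"

definition ell :: "real \<Rightarrow> real \<Rightarrow> real" where
  "ell \<beta> r = r powr \<beta>"

definition e_pt :: "real \<Rightarrow> real \<times> real" where
  "e_pt lam = (lam, 0)"

definition interference ::
  "real \<Rightarrow> (nat \<Rightarrow> 'w \<Rightarrow> real \<times> real) \<Rightarrow> (nat \<Rightarrow> 'w \<Rightarrow> real) \<Rightarrow> real \<times> real \<Rightarrow> 'w \<Rightarrow> ennreal" where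
  "interference \<beta> x Fm y \<omega> =
     (\<Sum>i. ennreal (Fm i \<omega>) / ennreal (ell \<beta> (norm (y - x i \<omega>))))"

text \<open>SIR_{0,lam} = (F_0 / l(||e_lam||)) / I(e_lam), with F lam 0 = F_{0 lam} and
  F lam (Suc i) the mark of point x i.\<close>
definition SIR ::
  "real \<Rightarrow> (nat \<Rightarrow> 'w \<Rightarrow> real \<times> real) \<Rightarrow> (real \<Rightarrow> nat \<Rightarrow> 'w \<Rightarrow> real) \<Rightarrow> real \<Rightarrow> 'w \<Rightarrow> ennreal" where
  "SIR \<beta> x F lam \<omega> =
     (ennreal (F lam 0 \<omega>) / ennreal (ell \<beta> (norm (e_pt lam))))
       / interference \<beta> x (\<lambda>i. F lam (Suc i)) (e_pt lam) \<omega>"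

end

theory Submission imports Defs begin


lemma suminf_swap: fixes f :: "nat \<Rightarrow> nat \<Rightarrow> ennreal"
  shows "(\<Sum>i. \<Sum>k. f i k) = (\<Sum>k. \<Sum>i. f i k)"
proof -
  have "(\<Sum>i. \<Sum>k. f i k) = (\<integral>\<^sup>+i. (\<Sum>k. f i k) \<partial>count_space UNIV)"
    by (simp add: nn_integral_count_space_nat)
  also have "\<dots> = (\<Sum>k. \<integral>\<^sup>+i. f i k \<partial>count_space UNIV)"
    by (rule nn_integral_suminf) simp
  also have "\<dots> = (\<Sum>k. \<Sum>i. f i k)" by (simp add: nn_integral_count_space_nat)
  finally show ?thesis .
qed

lemma ball_meas: fixes e :: "real \<times> real" assumes "R \<ge> 0"
  shows "emeasure lborel (ball e R) \<le> ennreal (4 * R^2)"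
proof -
  have "ball e R \<subseteq> cbox (e - (R,R)) (e + (R,R))"
  proof
    fix z assume "z \<in> ball e R"
    hence d: "dist e z < R" by simp
    have "\<bar>fst e - fst z\<bar> \<le> dist e z" "\<bar>snd e - snd z\<bar> \<le> dist e z"
      using dist_fst_le[of e z] dist_snd_le[of e z] by (simp_all add: dist_real_def)
    thus "z \<in> cbox (e - (R,R)) (e + (R,R))" using d
      by (cases e, cases z) (auto simp: cbox_Pair_eq)
  qed
  hence "emeasure lborel (ball e R) \<le> emeasure lborel (cbox (e - (R,R)) (e + (R,R)))"
    by (intro emeasure_mono) auto
  also have "\<dots> = ennreal (4 * R^2)" using assms
    by (cases e) (simp add: emeasure_lborel_cbox_eq Basis_prod_def power2_eq_square)
  finally show ?thesis .
qed

lemma exists_k: fixes r d :: real assumes "r > 0" "d \<ge> r"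
  shows "\<exists>k. r * 2^k \<le> d \<and> d < r * 2^(Suc k)"
proof -
  obtain n where n: "d / r < 2^n" using real_arch_pow[of 2 "d/r"] by auto
  let ?P = "\<lambda>n. d < r * 2^n"
  have Pn: "?P n" using n assms by (simp add: field_simps)
  define m where "m = (LEAST n. ?P n)"
  have Pm: "?P m" unfolding m_def by (rule LeastI[where P="?P", OF Pn])
  have m0: "m \<noteq> 0" using Pm assms by (cases m) auto
  then obtain k where k: "m = Suc k" by (cases m) auto
  have "\<not> ?P k" using not_less_Least[of k ?P] k unfolding m_def by simp
  thus ?thesis using Pm k by (intro exI[of _ k]) simp
qed

locale sett =
  fixes M :: "'w measure"
    and x :: "nat \<Rightarrow> 'w \<Rightarrow> real \<times> real"
    and F :: "real \<Rightarrow> nat \<Rightarrow> 'w \<Rightarrow> real"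
    and Fd :: "real measure"
    and \<beta> :: real
  assumes beta: "\<beta> > 2"
    and ppp: "poisson_pp M x"
    and Fd_prob: "prob_space Fd" and Fd_sets: "sets Fd = sets borel"
    and Fd_pos: "AE p in Fd. p > 0"
    and Fd_mean: "(\<integral>\<^sup>+ p. ennreal p \<partial>Fd) < \<infinity>"
    and F_rv: "\<And>lam i. lam > 0 \<Longrightarrow> F lam i \<in> borel_measurable M"
    and F_distr: "\<And>lam i. lam > 0 \<Longrightarrow> distr M borel (F lam i) = Fd"
    and F_indep_Phi: "\<And>lam. lam > 0 \<Longrightarrow>
          indep_rv2 M
            (Pi\<^sub>M UNIV (\<lambda>_. borel)) (\<lambda>\<omega> i. x i \<omega>)
            (Pi\<^sub>M UNIV (\<lambda>_. borel)) (\<lambda>\<omega> i. F lam i \<omega>)"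
begin

lemma PP: "prob_space M \<and>
     (\<forall>i. x i \<in> borel_measurable M) \<and>
     (\<forall>\<omega>\<in>space M. inj (\<lambda>i. x i \<omega>)) \<and>
     (\<forall>\<omega>\<in>space M. \<forall>B. bounded B \<longrightarrow> finite (pts x \<omega> \<inter> B)) \<and>
     (\<forall>B\<in>sets borel. bounded B \<longrightarrow>
        count_pts x B \<in> measurable M (count_space UNIV) \<and>
        (\<forall>k. measure M {\<omega>\<in>space M. count_pts x B \<omega> = k}
               = measure lborel B ^ k / fact k * exp (- measure lborel B))) \<and>
     (\<forall>(B :: nat \<Rightarrow> (real \<times> real) set) K. finite K \<longrightarrow> disjoint_family_on B K \<longrightarrow>
        (\<forall>k\<in>K. B k \<in> sets borel \<and> bounded (B k)) \<longrightarrow>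
        prob_space.indep_vars M (\<lambda>_. count_space UNIV) (\<lambda>k. count_pts x (B k)) K)"
  using ppp unfolding poisson_pp_def .

lemma PS: "prob_space M" using PP by (rule conjunct1)

sublocale P: prob_space M by (rule PS)

lemma x_meas[measurable]: "x i \<in> borel_measurable M"
  using PP[THEN conjunct2, THEN conjunct1] by (rule spec)

lemma x_inj: "\<omega> \<in> space M \<Longrightarrow> inj (\<lambda>i. x i \<omega>)"
  using PP[THEN conjunct2, THEN conjunct2, THEN conjunct1] by (rule bspec)

lemma loc_fin: assumes "\<omega> \<in> space M" "bounded B" shows "finite (pts x \<omega> \<inter> B)"
proof -
  have "\<forall>B. bounded B \<longrightarrow> finite (pts x \<omega> \<inter> B)"
    using PP[THEN conjunct2, THEN conjunct2, THEN conjunct2, THEN conjunct1] assms(1) by (rule bspec)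
  thus ?thesis using assms(2) by simp
qed

lemma count_both: assumes "B \<in> sets borel" "bounded B"
  shows "count_pts x B \<in> measurable M (count_space UNIV) \<and>
        (\<forall>k. measure M {\<omega>\<in>space M. count_pts x B \<omega> = k}
               = measure lborel B ^ k / fact k * exp (- measure lborel B))"
proof -
  have "bounded B \<longrightarrow> count_pts x B \<in> measurable M (count_space UNIV) \<and>
        (\<forall>k. measure M {\<omega>\<in>space M. count_pts x B \<omega> = k}
               = measure lborel B ^ k / fact k * exp (- measure lborel B))"
    using PP[THEN conjunct2, THEN conjunct2, THEN conjunct2, THEN conjunct2, THEN conjunct1] assms(1) by (rule bspec)
  thus ?thesis using assms(2) by (rule mp)
qed

lemma count_meas: "B \<in> sets borel \<Longrightarrow> bounded B \<Longrightarrow> count_pts x B \<in> measurable M (count_space UNIV)"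
  using count_both by blast

lemma count_dist: "B \<in> sets borel \<Longrightarrow> bounded B \<Longrightarrow>
   measure M {\<omega>\<in>space M. count_pts x B \<omega> = k} = measure lborel B ^ k / fact k * exp (- measure lborel B)"
  using count_both by blast

lemma poisson_series: fixes m :: real assumes "m \<ge> 0"
  shows "(\<Sum>k. ennreal (of_nat k * (m ^ k / fact k * exp (- m)))) = ennreal m"
proof -
  have "(\<lambda>n. m ^ n / fact n) sums exp m" using exp_converges[of m] by (simp add: divide_inverse mult.commute)
  hence "(\<lambda>n. m * exp (-m) * (m ^ n / fact n)) sums (m * exp (-m) * exp m)" by (rule sums_mult)
  hence s0: "(\<lambda>n. m * exp (-m) * (m ^ n / fact n)) sums m" by (simp add: exp_minus field_simps)
  have eqn: "\<And>n. m * exp (-m) * (m ^ n / fact n) = of_nat (Suc n) * (m ^ Suc n / fact (Suc n) * exp (- m))"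
  proof -
    fix n
    have q: "of_nat (Suc n) / fact (Suc n) = (1::real) / fact n"
      by (simp only: fact_Suc) (simp add: field_simps del: of_nat_Suc)
    have "of_nat (Suc n) * (m ^ Suc n / fact (Suc n) * exp (- m)) = (of_nat (Suc n) / fact (Suc n)) * (m ^ Suc n * exp (- m))"
      by simp
    also have "\<dots> = m * exp (-m) * (m ^ n / fact n)" unfolding q by simp
    finally show "m * exp (-m) * (m ^ n / fact n) = of_nat (Suc n) * (m ^ Suc n / fact (Suc n) * exp (- m))" by simp
  qed
  have "(\<lambda>n. of_nat (Suc n) * (m ^ Suc n / fact (Suc n) * exp (- m))) sums m"
    using s0 unfolding eqn .
  hence s: "(\<lambda>k. of_nat k * (m ^ k / fact k * exp (- m))) sums m"
    using sums_Suc_iff[where f="\<lambda>k. of_nat k * (m ^ k / fact k * exp (- m))"] by simp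
  have sm: "summable (\<lambda>k. of_nat k * (m ^ k / fact k * exp (- m)))" using s by (rule sums_summable)
  have nn: "\<And>k. 0 \<le> of_nat k * (m ^ k / fact k * exp (- m))" using assms by simp
  have "(\<Sum>k. ennreal (of_nat k * (m ^ k / fact k * exp (- m)))) = ennreal (\<Sum>k. of_nat k * (m ^ k / fact k * exp (- m)))"
    by (rule suminf_ennreal2[OF nn sm])
  also have "(\<Sum>k. of_nat k * (m ^ k / fact k * exp (- m))) = m" using s by (rule sums_unique[symmetric])
  finally show ?thesis .
qed

lemma count_mean: assumes B: "B \<in> sets borel" "bounded B"
  shows "(\<integral>\<^sup>+\<omega>. of_nat (count_pts x B \<omega>) \<partial>M) = ennreal (measure lborel B)"
proof -
  let ?N = "count_pts x B"
  have Nm[measurable]: "?N \<in> measurable M (count_space UNIV)" using count_meas B by blast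
  have setk: "{\<omega>\<in>space M. ?N \<omega> = k} \<in> sets M" for k by measurable
  have eq: "(of_nat (?N \<omega>)::ennreal) = (\<Sum>k. of_nat k * indicator {\<omega>\<in>space M. ?N \<omega> = k} \<omega>)" if "\<omega> \<in> space M" for \<omega>
  proof -
    have "(\<Sum>k. (of_nat k::ennreal) * indicator {\<omega>\<in>space M. ?N \<omega> = k} \<omega>) = 
       (\<Sum>k\<in>{?N \<omega>}. of_nat k * indicator {\<omega>\<in>space M. ?N \<omega> = k} \<omega>)"
      by (rule suminf_finite) (auto simp: indicator_def)
    also have "\<dots> = of_nat (?N \<omega>)" using that by simp
    finally show ?thesis by (rule sym)
  qed
  have "(\<integral>\<^sup>+\<omega>. of_nat (?N \<omega>) \<partial>M) = (\<integral>\<^sup>+\<omega>. (\<Sum>k. of_nat k * indicator {\<omega>\<in>space M. ?N \<omega> = k} \<omega>) \<partial>M)"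
    by (rule nn_integral_cong) (simp add: eq)
  also have "\<dots> = (\<Sum>k. \<integral>\<^sup>+\<omega>. of_nat k * indicator {\<omega>\<in>space M. ?N \<omega> = k} \<omega> \<partial>M)"
    by (rule nn_integral_suminf) (use setk in auto)
  also have "\<dots> = (\<Sum>k. of_nat k * emeasure M {\<omega>\<in>space M. ?N \<omega> = k})"
    using setk by (simp add: nn_integral_cmult_indicator)
  also have "\<dots> = (\<Sum>k. ennreal (of_nat k * (measure lborel B ^ k / fact k * exp (- measure lborel B))))"
  proof (rule suminf_cong)
    fix k
    show "of_nat k * emeasure M {\<omega>\<in>space M. ?N \<omega> = k} = ennreal (of_nat k * (measure lborel B ^ k / fact k * exp (- measure lborel B)))"
    proof -
      have "emeasure M {\<omega>\<in>space M. ?N \<omega> = k} = ennreal (measure lborel B ^ k / fact k * exp (- measure lborel B))"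
        using count_dist[OF B, of k] by (simp add: P.emeasure_eq_measure)
      thus ?thesis using ennreal_mult'[of "real k" "measure lborel B ^ k / fact k * exp (- measure lborel B)"]
        by (simp add: ennreal_of_nat_eq_real_of_nat)
    qed
  qed
  also have "\<dots> = ennreal (measure lborel B)" by (rule poisson_series) simp
  finally show ?thesis .
qed


lemma space_PiM_UNIV: "space (Pi\<^sub>M UNIV (\<lambda>_. (borel :: ('b::topological_space) measure))) = UNIV"
  by (auto simp: space_PiM)

lemma indep_ev:
  assumes lam: "lam > 0" and S: "S \<in> sets borel" and B: "B \<in> sets borel"
  shows "emeasure M {\<omega>\<in>space M. x i \<omega> \<in> S \<and> F lam j \<omega> \<in> B} =
     emeasure M {\<omega>\<in>space M. x i \<omega> \<in> S} * emeasure M {\<omega>\<in>space M. F lam j \<omega> \<in> B}"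
proof -
  let ?PX = "Pi\<^sub>M UNIV (\<lambda>_. (borel :: (real\<times>real) measure))"
  let ?PF = "Pi\<^sub>M UNIV (\<lambda>_. (borel :: real measure))"
  define A where "A = (\<lambda>z. z i) -` S \<inter> space ?PX"
  define B' where "B' = (\<lambda>z. z j) -` B \<inter> space ?PF"
  have c1: "(\<lambda>z. z i) \<in> measurable ?PX borel" by (rule measurable_component_singleton) simp
  have c2: "(\<lambda>z. z j) \<in> measurable ?PF borel" by (rule measurable_component_singleton) simp
  have A: "A \<in> sets ?PX" unfolding A_def by (rule measurable_sets[OF c1 S])
  have B': "B' \<in> sets ?PF" unfolding B'_def by (rule measurable_sets[OF c2 B])
  have ind: "indep_rv2 M ?PX (\<lambda>\<omega> i. x i \<omega>) ?PF (\<lambda>\<omega> i. F lam i \<omega>)" using F_indep_Phi lam by blast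
  have m: "measure M ((\<lambda>\<omega> i. x i \<omega>) -` A \<inter> (\<lambda>\<omega> i. F lam i \<omega>) -` B' \<inter> space M)
      = measure M ((\<lambda>\<omega> i. x i \<omega>) -` A \<inter> space M) * measure M ((\<lambda>\<omega> i. F lam i \<omega>) -` B' \<inter> space M)"
    using ind A B' unfolding indep_rv2_def by blast
  have e1: "(\<lambda>\<omega> i. x i \<omega>) -` A \<inter> (\<lambda>\<omega> i. F lam i \<omega>) -` B' \<inter> space M = {\<omega>\<in>space M. x i \<omega> \<in> S \<and> F lam j \<omega> \<in> B}"
    unfolding A_def B'_def by (auto simp: space_PiM_UNIV)
  have e2: "(\<lambda>\<omega> i. x i \<omega>) -` A \<inter> space M = {\<omega>\<in>space M. x i \<omega> \<in> S}"
    unfolding A_def by (auto simp: space_PiM_UNIV)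
  have e3: "(\<lambda>\<omega> i. F lam i \<omega>) -` B' \<inter> space M = {\<omega>\<in>space M. F lam j \<omega> \<in> B}"
    unfolding B'_def by (auto simp: space_PiM_UNIV)
  show ?thesis using m unfolding e1 e2 e3
    by (simp add: P.emeasure_eq_measure ennreal_mult)
qed

lemma evset:
  assumes lam: "lam > 0" and S: "S \<in> sets borel" and B: "B \<in> sets borel"
  shows "{\<omega>\<in>space M. x i \<omega> \<in> S \<and> F lam j \<omega> \<in> B} \<in> sets M"
proof -
  have "{\<omega>\<in>space M. x i \<omega> \<in> S \<and> F lam j \<omega> \<in> B} = (x i -` S \<inter> space M) \<inter> (F lam j -` B \<inter> space M)"
    by auto
  also have "\<dots> \<in> sets M" using measurable_sets[OF x_meas S] measurable_sets[OF F_rv[OF lam] B] by blast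
  finally show ?thesis .
qed

lemma xset: "S \<in> sets borel \<Longrightarrow> {\<omega>\<in>space M. x i \<omega> \<in> S} \<in> sets M"
  using measurable_sets[OF x_meas, of S i] by (simp add: vimage_def Int_def conj_commute)

lemma E_prod:
  assumes lam: "lam > 0" and S: "S \<in> sets borel"
  shows "(\<integral>\<^sup>+\<omega>. ennreal (F lam j \<omega>) * indicator {\<omega>\<in>space M. x i \<omega> \<in> S} \<omega> \<partial>M)
     = emeasure M {\<omega>\<in>space M. x i \<omega> \<in> S} * (\<integral>\<^sup>+p. ennreal p \<partial>Fd)"
proof -
  define E where "E = {\<omega>\<in>space M. x i \<omega> \<in> S}"
  have Fm[measurable]: "F lam j \<in> borel_measurable M" using F_rv lam by blast
  have E[measurable]: "E \<in> sets M" unfolding E_def using xset S by blast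
  let ?D = "density M (indicator E)"
  have indE: "(indicator E :: 'w \<Rightarrow> ennreal) \<in> borel_measurable M" by (rule borel_measurable_indicator[OF E])
  have Fe: "(\<lambda>\<omega>. ennreal (F lam j \<omega>)) \<in> borel_measurable M" by (rule measurable_compose[OF Fm measurable_ennreal])
  have FmD: "F lam j \<in> measurable ?D borel"
    using Fm by (simp add: measurable_cong_sets[OF sets_density refl])
  have "(\<integral>\<^sup>+\<omega>. ennreal (F lam j \<omega>) * indicator E \<omega> \<partial>M) = (\<integral>\<^sup>+\<omega>. indicator E \<omega> * ennreal (F lam j \<omega>) \<partial>M)"
    by (simp only: mult.commute)
  also have "\<dots> = (\<integral>\<^sup>+\<omega>. ennreal (F lam j \<omega>) \<partial>?D)"
    by (rule nn_integral_density[OF indE Fe, symmetric])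
  also have "\<dots> = (\<integral>\<^sup>+p. ennreal p \<partial>distr ?D borel (F lam j))"
    by (rule nn_integral_distr[OF FmD, symmetric]) simp
  also have "distr ?D borel (F lam j) = scale_measure (emeasure M E) Fd"
  proof (rule measure_eqI)
    show "sets (distr ?D borel (F lam j)) = sets (scale_measure (emeasure M E) Fd)"
      using Fd_sets by simp
    fix A assume "A \<in> sets (distr ?D borel (F lam j))"
    hence A[measurable]: "A \<in> sets borel" by simp
    have "emeasure (distr ?D borel (F lam j)) A = emeasure ?D (F lam j -` A \<inter> space M)"
      using emeasure_distr[OF FmD A] by simp
    also have "\<dots> = (\<integral>\<^sup>+\<omega>. indicator E \<omega> * indicator (F lam j -` A \<inter> space M) \<omega> \<partial>M)"
      by (rule emeasure_density[OF indE measurable_sets[OF Fm A]])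
    also have "\<dots> = (\<integral>\<^sup>+\<omega>. indicator {\<omega>\<in>space M. x i \<omega> \<in> S \<and> F lam j \<omega> \<in> A} \<omega> \<partial>M)"
      by (rule nn_integral_cong) (auto simp: E_def indicator_def)
    also have "\<dots> = emeasure M {\<omega>\<in>space M. x i \<omega> \<in> S \<and> F lam j \<omega> \<in> A}"
      by (intro nn_integral_indicator) (rule evset[OF lam S A])
    also have "\<dots> = emeasure M E * emeasure M {\<omega>\<in>space M. F lam j \<omega> \<in> A}"
      unfolding E_def by (rule indep_ev[OF lam S A])
    also have "emeasure M {\<omega>\<in>space M. F lam j \<omega> \<in> A} = emeasure Fd A"
    proof -
      have "emeasure Fd A = emeasure (distr M borel (F lam j)) A" using F_distr lam by simp
      also have "\<dots> = emeasure M (F lam j -` A \<inter> space M)" by (rule emeasure_distr[OF Fm A])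
      finally show ?thesis by (simp add: vimage_def Int_def conj_commute)
    qed
    finally show "emeasure (distr ?D borel (F lam j)) A = emeasure (scale_measure (emeasure M E) Fd) A"
      by simp
  qed
  also have "(\<integral>\<^sup>+p. ennreal p \<partial>scale_measure (emeasure M E) Fd) = emeasure M E * (\<integral>\<^sup>+p. ennreal p \<partial>Fd)"
    by (rule nn_integral_scale_measure) (simp add: measurable_cong_sets[OF Fd_sets refl])
  finally show ?thesis unfolding E_def .
qed


lemma sum_ind_count:
  assumes w: "\<omega> \<in> space M" and b: "bounded S"
  shows "(\<Sum>i. indicator S (x i \<omega>) :: ennreal) = of_nat (count_pts x S \<omega>)"
proof -
  let ?I = "{i. x i \<omega> \<in> S}"
  have inj: "inj (\<lambda>i. x i \<omega>)" using x_inj w by blast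
  have im: "(\<lambda>i. x i \<omega>) ` ?I = pts x \<omega> \<inter> S" by (auto simp: pts_def)
  have injI: "inj_on (\<lambda>i. x i \<omega>) ?I" using inj by (simp add: inj_on_def inj_def)
  have fin: "finite ?I"
    using loc_fin[OF w b] im finite_imageD[OF _ injI] by simp
  have "(\<Sum>i. indicator S (x i \<omega>) :: ennreal) = (\<Sum>i\<in>?I. indicator S (x i \<omega>))"
    by (rule suminf_finite[OF fin]) (auto simp: indicator_def)
  also have "\<dots> = of_nat (card ?I)" by (simp add: indicator_def)
  also have "card ?I = count_pts x S \<omega>" unfolding count_pts_def im[symmetric]
    by (rule card_image[symmetric, OF injI])
  finally show ?thesis .
qed

lemma sumF_count:
  assumes lam: "lam > 0" and S: "S \<in> sets borel" and b: "bounded S"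
  shows "(\<integral>\<^sup>+\<omega>. (\<Sum>i. ennreal (F lam (Suc i) \<omega>) * indicator S (x i \<omega>)) \<partial>M)
     = ennreal (measure lborel S) * (\<integral>\<^sup>+p. ennreal p \<partial>Fd)"
proof -
  note S[measurable]
  have Fm[measurable]: "\<And>j. F lam j \<in> borel_measurable M" using F_rv lam by blast
  have "(\<integral>\<^sup>+\<omega>. (\<Sum>i. ennreal (F lam (Suc i) \<omega>) * indicator S (x i \<omega>)) \<partial>M)
     = (\<Sum>i. \<integral>\<^sup>+\<omega>. ennreal (F lam (Suc i) \<omega>) * indicator S (x i \<omega>) \<partial>M)"
    by (rule nn_integral_suminf) measurable
  also have "\<dots> = (\<Sum>i. emeasure M {\<omega>\<in>space M. x i \<omega> \<in> S} * (\<integral>\<^sup>+p. ennreal p \<partial>Fd))"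
  proof (rule suminf_cong)
    fix i
    have "(\<integral>\<^sup>+\<omega>. ennreal (F lam (Suc i) \<omega>) * indicator S (x i \<omega>) \<partial>M)
      = (\<integral>\<^sup>+\<omega>. ennreal (F lam (Suc i) \<omega>) * indicator {\<omega>\<in>space M. x i \<omega> \<in> S} \<omega> \<partial>M)"
      by (rule nn_integral_cong) (auto simp: indicator_def)
    also have "\<dots> = emeasure M {\<omega>\<in>space M. x i \<omega> \<in> S} * (\<integral>\<^sup>+p. ennreal p \<partial>Fd)"
      by (rule E_prod[OF lam S])
    finally show "(\<integral>\<^sup>+\<omega>. ennreal (F lam (Suc i) \<omega>) * indicator S (x i \<omega>) \<partial>M)
      = emeasure M {\<omega>\<in>space M. x i \<omega> \<in> S} * (\<integral>\<^sup>+p. ennreal p \<partial>Fd)" .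
  qed
  also have "\<dots> = (\<Sum>i. emeasure M {\<omega>\<in>space M. x i \<omega> \<in> S}) * (\<integral>\<^sup>+p. ennreal p \<partial>Fd)"
    by simp
  also have "(\<Sum>i. emeasure M {\<omega>\<in>space M. x i \<omega> \<in> S}) = (\<Sum>i. \<integral>\<^sup>+\<omega>. indicator S (x i \<omega>) \<partial>M)"
  proof (rule suminf_cong)
    fix i
    have "emeasure M {\<omega>\<in>space M. x i \<omega> \<in> S} = (\<integral>\<^sup>+\<omega>. indicator {\<omega>\<in>space M. x i \<omega> \<in> S} \<omega> \<partial>M)"
      using xset[OF S] by simp
    also have "\<dots> = (\<integral>\<^sup>+\<omega>. indicator S (x i \<omega>) \<partial>M)"
      by (rule nn_integral_cong) (auto simp: indicator_def)
    finally show "emeasure M {\<omega>\<in>space M. x i \<omega> \<in> S} = (\<integral>\<^sup>+\<omega>. indicator S (x i \<omega>) \<partial>M)" .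
  qed
  also have "\<dots> = (\<integral>\<^sup>+\<omega>. (\<Sum>i. indicator S (x i \<omega>)) \<partial>M)"
    by (rule nn_integral_suminf[symmetric]) measurable
  also have "\<dots> = (\<integral>\<^sup>+\<omega>. of_nat (count_pts x S \<omega>) \<partial>M)"
    by (rule nn_integral_cong) (simp add: sum_ind_count[OF _ b])
  also have "\<dots> = ennreal (measure lborel S)" by (rule count_mean[OF S b])
  finally show ?thesis .
qed

end

definition Sk :: "real \<Rightarrow> real \<times> real \<Rightarrow> nat \<Rightarrow> (real \<times> real) set" where
  "Sk r e k = ball e (r * 2 ^ Suc k) - ball e (r * 2 ^ k)"

definition ak :: "real \<Rightarrow> real \<Rightarrow> nat \<Rightarrow> real" where
  "ak b r k = (r * 2 ^ k) powr (- b)"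

definition tk :: "real \<Rightarrow> real \<Rightarrow> nat \<Rightarrow> real" where
  "tk b r k = ak b r k * (16 * r^2 * 4 ^ k)"

lemma Sk_borel: "Sk r e k \<in> sets borel" unfolding Sk_def by auto

lemma Sk_bounded: "bounded (Sk r e k)" unfolding Sk_def by (meson bounded_ball bounded_diff)

lemma Sk_meas: assumes "r > 0" shows "measure lborel (Sk r e k) \<le> 16 * r^2 * 4 ^ k"
proof -
  have "emeasure lborel (Sk r e k) \<le> emeasure lborel (ball e (r * 2 ^ Suc k))"
    unfolding Sk_def by (intro emeasure_mono) auto
  also have "\<dots> \<le> ennreal (4 * (r * 2 ^ Suc k)^2)" using assms by (intro ball_meas) simp
  also have "4 * (r * 2 ^ Suc k)^2 = 16 * r^2 * 4 ^ k"
    by (simp add: power_mult_distrib power_mult[symmetric] mult.commute[of k 2] power_Suc)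
       (simp add: power_mult)
  finally have e: "emeasure lborel (Sk r e k) \<le> ennreal (16 * r^2 * 4 ^ k)" .
  hence "emeasure lborel (Sk r e k) \<noteq> top" by (auto simp: top_unique)
  thus ?thesis using e by (simp add: emeasure_eq_ennreal_measure)
qed

lemma tk_summable: assumes b: "b > 2" and r: "r > 0" shows "summable (tk b r)"
proof (rule summable_ratio_test[where c = "4 * 2 powr (- b)" and N = 0])
  have "2 powr (- b) < 2 powr (-2)" using b by (intro powr_less_mono) auto
  thus "4 * 2 powr (- b) < (1::real)" by (simp add: powr_minus_divide)
  fix n :: nat
  have e1: "tk b r (Suc n) = (r * 2 ^ n * 2) powr (- b) * (16 * r^2 * 4 ^ n * 4)"
    unfolding tk_def ak_def by (simp only: power_Suc mult_ac)
  have e2: "(r * 2 ^ n * 2) powr (- b) = (r * 2 ^ n) powr (- b) * 2 powr (- b)"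
    by (rule powr_mult)
  have eq: "tk b r (Suc n) = (4 * 2 powr (- b)) * tk b r n"
    unfolding e1 e2 unfolding tk_def ak_def by (simp only: mult_ac)
  have "tk b r n \<ge> 0" "tk b r (Suc n) \<ge> 0" using r unfolding tk_def ak_def by simp_all
  thus "norm (tk b r (Suc n)) \<le> 4 * 2 powr (- b) * norm (tk b r n)"
    using eq by simp
qed

lemma tk_nonneg: "r > 0 \<Longrightarrow> tk b r k \<ge> 0" unfolding tk_def ak_def by simp


definition gfun :: "real \<Rightarrow> real \<Rightarrow> real \<times> real \<Rightarrow> real \<times> real \<Rightarrow> ennreal" where
  "gfun b r e z = (\<Sum>k. ennreal (ak b r k) * indicator (Sk r e k) z)"

lemma single_le_suminf: "(f k :: ennreal) \<le> (\<Sum>k. f k)"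
  using sum_le_suminf[of f "{k}"] by simp

lemma term_le:
  fixes e z :: "real \<times> real" and Fv b r :: real
  assumes r: "r > 0" and b: "b \<ge> 0" and d: "dist e z \<ge> r"
  shows "ennreal Fv / ennreal (ell b (norm (e - z))) \<le> ennreal Fv * gfun b r e z"
proof -
  let ?d = "dist e z"
  have nd: "norm (e - z) = ?d" by (simp add: dist_norm)
  obtain k where k: "r * 2^k \<le> ?d" "?d < r * 2^(Suc k)" using exists_k[OF r d] by blast
  have zS: "z \<in> Sk r e k" unfolding Sk_def using k by auto
  have g: "ennreal (ak b r k) \<le> gfun b r e z"
    unfolding gfun_def using single_le_suminf[of "\<lambda>k. ennreal (ak b r k) * indicator (Sk r e k) z" k] zS by simp
  have pos1: "r * 2^k > 0" using r by simp
  have dpos: "?d > 0" using r d by linarith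
  have Lpos: "?d powr b > 0" using dpos by simp
  have mono: "(r * 2^k) powr b \<le> ?d powr b" using k(1) pos1 b by (intro powr_mono2) auto
  have pos2: "(r * 2^k) powr b > 0" using pos1 r by simp
  have ineq: "1 / ?d powr b \<le> ak b r k"
    unfolding ak_def powr_minus_divide using mono pos2 Lpos by (simp add: divide_simps)
  show ?thesis
  proof (cases "Fv \<le> 0")
    case True thus ?thesis by (simp add: ennreal_neg)
  next
    case False
    hence Fp: "Fv > 0" by simp
    have "ennreal Fv / ennreal (ell b (norm (e - z))) = ennreal (Fv / ?d powr b)"
      unfolding ell_def nd using Fp Lpos by (simp add: divide_ennreal)
    also have "Fv / ?d powr b = Fv * (1 / ?d powr b)" by simp
    also have "ennreal (Fv * (1 / ?d powr b)) \<le> ennreal (Fv * ak b r k)"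
      using ineq Fp by (intro ennreal_leI mult_left_mono) auto
    also have "\<dots> = ennreal Fv * ennreal (ak b r k)" by (rule ennreal_mult') (use Fp in simp)
    also have "\<dots> \<le> ennreal Fv * gfun b r e z" using g by (rule mult_left_mono) simp
    finally show ?thesis .
  qed
qed

context sett begin

lemma I_le_J:
  assumes r: "r > 0" and d: "\<And>i. dist e (x i \<omega>) \<ge> r"
  shows "interference \<beta> x (\<lambda>i. F lam (Suc i)) e \<omega> \<le> (\<Sum>i. ennreal (F lam (Suc i) \<omega>) * gfun \<beta> r e (x i \<omega>))"
  unfolding interference_def
  by (rule suminf_le) (use term_le[OF r _ d] beta in auto)

lemma EJ:
  assumes lam: "lam > 0" and r: "r > 0"
  shows "(\<integral>\<^sup>+\<omega>. (\<Sum>i. ennreal (F lam (Suc i) \<omega>) * gfun \<beta> r e (x i \<omega>)) \<partial>M)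
     \<le> ennreal (\<Sum>k. tk \<beta> r k) * (\<integral>\<^sup>+p. ennreal p \<partial>Fd)"
proof -
  have Fm[measurable]: "\<And>j. F lam j \<in> borel_measurable M" using F_rv lam by blast
  have Sm[measurable]: "\<And>k. Sk r e k \<in> sets borel" by (rule Sk_borel)
  let ?EF = "\<integral>\<^sup>+p. ennreal p \<partial>Fd"
  have pw: "(\<Sum>i. ennreal (F lam (Suc i) \<omega>) * gfun \<beta> r e (x i \<omega>))
     = (\<Sum>k. ennreal (ak \<beta> r k) * (\<Sum>i. ennreal (F lam (Suc i) \<omega>) * indicator (Sk r e k) (x i \<omega>)))" for \<omega>
  proof -
    have "(\<Sum>i. ennreal (F lam (Suc i) \<omega>) * gfun \<beta> r e (x i \<omega>))
       = (\<Sum>i. \<Sum>k. ennreal (ak \<beta> r k) * (ennreal (F lam (Suc i) \<omega>) * indicator (Sk r e k) (x i \<omega>)))"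
      unfolding gfun_def by (simp only: ennreal_suminf_cmult[symmetric] mult_ac)
    also have "\<dots> = (\<Sum>k. \<Sum>i. ennreal (ak \<beta> r k) * (ennreal (F lam (Suc i) \<omega>) * indicator (Sk r e k) (x i \<omega>)))"
      by (rule suminf_swap)
    also have "\<dots> = (\<Sum>k. ennreal (ak \<beta> r k) * (\<Sum>i. ennreal (F lam (Suc i) \<omega>) * indicator (Sk r e k) (x i \<omega>)))"
      by (simp only: ennreal_suminf_cmult)
    finally show ?thesis .
  qed
  have "(\<integral>\<^sup>+\<omega>. (\<Sum>i. ennreal (F lam (Suc i) \<omega>) * gfun \<beta> r e (x i \<omega>)) \<partial>M)
    = (\<integral>\<^sup>+\<omega>. (\<Sum>k. ennreal (ak \<beta> r k) * (\<Sum>i. ennreal (F lam (Suc i) \<omega>) * indicator (Sk r e k) (x i \<omega>))) \<partial>M)"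
    by (simp only: pw)
  also have "\<dots> = (\<Sum>k. \<integral>\<^sup>+\<omega>. ennreal (ak \<beta> r k) * (\<Sum>i. ennreal (F lam (Suc i) \<omega>) * indicator (Sk r e k) (x i \<omega>)) \<partial>M)"
    by (rule nn_integral_suminf) measurable
  also have "\<dots> = (\<Sum>k. ennreal (ak \<beta> r k) * (ennreal (measure lborel (Sk r e k)) * ?EF))"
  proof (rule suminf_cong)
    fix k
    show "(\<integral>\<^sup>+\<omega>. ennreal (ak \<beta> r k) * (\<Sum>i. ennreal (F lam (Suc i) \<omega>) * indicator (Sk r e k) (x i \<omega>)) \<partial>M)
       = ennreal (ak \<beta> r k) * (ennreal (measure lborel (Sk r e k)) * ?EF)"
      by (subst nn_integral_cmult) (measurable, simp add: sumF_count[OF lam Sk_borel Sk_bounded])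
  qed
  also have "\<dots> \<le> (\<Sum>k. ennreal (tk \<beta> r k) * ?EF)"
  proof (rule suminf_le)
    fix k
    have "ennreal (ak \<beta> r k) * ennreal (measure lborel (Sk r e k)) = ennreal (ak \<beta> r k * measure lborel (Sk r e k))"
      by (simp add: ak_def ennreal_mult)
    also have "\<dots> \<le> ennreal (tk \<beta> r k)"
      unfolding tk_def using Sk_meas[OF r, of e k] by (intro ennreal_leI mult_left_mono) (auto simp: ak_def)
    finally have "ennreal (ak \<beta> r k) * ennreal (measure lborel (Sk r e k)) \<le> ennreal (tk \<beta> r k)" .
    thus "ennreal (ak \<beta> r k) * (ennreal (measure lborel (Sk r e k)) * ?EF) \<le> ennreal (tk \<beta> r k) * ?EF"
      by (simp only: mult.assoc[symmetric]) (rule mult_right_mono, simp_all)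
  qed auto
  also have "\<dots> = ennreal (\<Sum>k. tk \<beta> r k) * ?EF"
    using suminf_ennreal2[of "tk \<beta> r", OF tk_nonneg[OF r] tk_summable[OF beta r]] by simp
  finally show ?thesis .
qed

end


lemma Fd_small: fixes Fd :: "real measure"
  assumes Fd_prob: "prob_space Fd" and Fd_sets: "sets Fd = sets borel" and Fd_pos: "AE p in Fd. p > 0"
  and e: "\<epsilon> > 0"
  shows "\<exists>n::nat. measure Fd {..(1::real) / Suc n} < \<epsilon>"
proof -
  interpret Q: prob_space Fd by (rule Fd_prob)
  have spFd: "space Fd = UNIV" using sets_eq_imp_space_eq[OF Fd_sets] by simp
  define A where "A n = {..(1::real) / (Suc n)}" for n
  have A_sets: "range A \<subseteq> sets Fd" unfolding A_def Fd_sets by (intro image_subsetI) simp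
  have fr: "\<And>m n. m \<le> n \<Longrightarrow> (1::real) / Suc n \<le> 1 / Suc m"
    by (intro divide_left_mono) auto
  have A_dec: "decseq A"
  proof (rule decseq_SucI)
    fix n show "A (Suc n) \<subseteq> A n" unfolding A_def atMost_subset_iff by (rule fr) simp
  qed
  have pos: "\<And>n. (0::real) \<le> 1 / Suc n" by simp
  have inter: "(\<Inter>n. A n) = {..0}"
  proof
    show "{..0} \<subseteq> (\<Inter>n. A n)"
    proof
      fix p :: real assume "p \<in> {..0}" hence p0: "p \<le> 0" by simp
      have "\<And>n. p \<le> 1 / Suc n" using p0 pos by (rule order.trans)
      thus "p \<in> (\<Inter>n. A n)" unfolding A_def by simp
    qed
    show "(\<Inter>n. A n) \<subseteq> {..0}"
    proof
      fix p assume p: "p \<in> (\<Inter>n. A n)"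
      show "p \<in> {..0}"
      proof (rule ccontr)
        assume "p \<notin> {..0}" hence pp: "p > 0" by simp
        obtain n :: nat where n: "1 / p < n" using reals_Archimedean2 by blast
        have "p \<le> 1 / Suc n" using p unfolding A_def by auto
        moreover have "1 < real n * p" using n pp by (simp add: divide_less_eq)
        hence "1 < real (Suc n) * p" using pp by (simp add: distrib_right)
        hence "1 / Suc n < p" by (simp add: divide_less_eq mult.commute)
        ultimately show False by simp
      qed
    qed
  qed
  have z: "emeasure Fd {..0} = 0"
  proof -
    have "{..0} \<in> sets Fd" using Fd_sets by simp
    moreover have "{p\<in>space Fd. \<not> p > 0} = {..0::real}" unfolding spFd by (simp add: set_eq_iff not_less)
    ultimately show ?thesis using AE_iff_measurable[of "{..0}" Fd "\<lambda>p. p > 0"] Fd_pos by simp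
  qed
  have "(\<lambda>n. measure Fd (A n)) \<longlonglongrightarrow> measure Fd (\<Inter>i. A i)"
    by (rule Q.finite_Lim_measure_decseq[OF A_sets A_dec])
  hence lim: "(\<lambda>n. measure Fd (A n)) \<longlonglongrightarrow> 0" unfolding inter using z by (simp add: Q.emeasure_eq_measure)
  have "eventually (\<lambda>n. measure Fd (A n) < \<epsilon>) sequentially" using order_tendstoD(2)[OF lim e] .
  then obtain n where n: "measure Fd (A n) < \<epsilon>" by (auto simp: eventually_at_top_linorder)
  thus ?thesis unfolding A_def by blast
qed

lemma SIR_good_aux:
  fixes I :: ennreal and L c \<delta> F0 :: real
  assumes L: "L > 0" and c: "c > 0" and d: "\<delta> > 0" and F0: "F0 > \<delta>" and I: "I < ennreal (\<delta> / c)"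
  shows "ennreal (c / L) \<le> (ennreal F0 / ennreal L) / I"
proof -
  have b: "ennreal F0 / ennreal L = ennreal (F0 / L)" using L F0 d by (intro divide_ennreal) auto
  have bpos: "F0 / L > 0" using L F0 d by simp
  show ?thesis
  proof (cases "I = 0")
    case True
    have F0p: "F0 > 0" using F0 d by simp
    have "ennreal (F0 / L) \<noteq> 0" using bpos F0p L by simp
    thus ?thesis using True unfolding b by simp
  next
    case False
    show ?thesis
    proof (rule ccontr)
      assume "\<not> ?thesis"
      hence lt: "ennreal (F0 / L) / I < ennreal (c / L)" unfolding b by simp
      have Itop: "I < top" using order.strict_trans[OF I ennreal_less_top] .
      have "ennreal (F0 / L) < ennreal (c / L) * I" using lt divide_less_ennreal[OF False Itop] by simp
      also have "\<dots> \<le> ennreal (c / L) * ennreal (\<delta> / c)" using I by (intro mult_left_mono) auto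
      also have "\<dots> = ennreal (\<delta> / L)" using c L d by (simp add: ennreal_mult[symmetric])
      also have "\<dots> \<le> ennreal (F0 / L)" using F0 L by (intro ennreal_leI divide_right_mono) auto
      finally show False by simp
    qed
  qed
qed

lemma Liminf_le_const: fixes X :: "'a \<Rightarrow> ereal"
  assumes "F \<noteq> bot" "eventually (\<lambda>n. X n \<le> C) F" shows "Liminf F X \<le> C"
  using Liminf_le_Limsup[OF assms(1)] Limsup_bounded[OF assms(2)] by (rule order.trans)

context sett begin

lemma delta_exists: assumes e: "\<epsilon> > 0"
  shows "\<exists>\<delta>>0. \<forall>lam>0. measure M {\<omega>\<in>space M. F lam 0 \<omega> \<le> \<delta>} \<le> \<epsilon>"
proof -
  obtain n :: nat where n: "measure Fd {..(1::real) / Suc n} < \<epsilon>"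
    using Fd_small[OF Fd_prob Fd_sets Fd_pos e] by blast
  show ?thesis
  proof (intro exI[of _ "1 / Suc n"] conjI allI impI)
    show "(0::real) < 1 / Suc n" by simp
    fix lam :: real assume lam: "lam > 0"
    have Fm: "F lam 0 \<in> borel_measurable M" using F_rv lam by blast
    have "{\<omega>\<in>space M. F lam 0 \<omega> \<le> 1 / Suc n} = F lam 0 -` {..1 / Suc n} \<inter> space M" by blast
    hence "measure M {\<omega>\<in>space M. F lam 0 \<omega> \<le> 1 / Suc n} = measure M (F lam 0 -` {..1 / Suc n} \<inter> space M)"
      by simp
    also have "\<dots> = measure (distr M borel (F lam 0)) {..1 / Suc n}"
      by (rule measure_distr[symmetric, OF Fm]) simp
    also have "\<dots> = measure Fd {..1 / Suc n}" using F_distr lam by simp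
    finally show "measure M {\<omega>\<in>space M. F lam 0 \<omega> \<le> 1 / Suc n} \<le> \<epsilon>" using n by simp
  qed
qed

lemma ball_prob: assumes r: "r > 0"
  shows "{\<omega>\<in>space M. count_pts x (ball e r) \<omega> \<noteq> 0} \<in> sets M"
    and "measure M {\<omega>\<in>space M. count_pts x (ball e r) \<omega> \<noteq> 0} \<le> 4 * r^2"
proof -
  have B: "ball e r \<in> sets borel" "bounded (ball e r)" by auto
  have Nm[measurable]: "count_pts x (ball e r) \<in> measurable M (count_space UNIV)" by (rule count_meas[OF B])
  show s: "{\<omega>\<in>space M. count_pts x (ball e r) \<omega> \<noteq> 0} \<in> sets M" by measurable
  have s0: "{\<omega>\<in>space M. count_pts x (ball e r) \<omega> = 0} \<in> sets M" by measurable
  have eq: "{\<omega>\<in>space M. count_pts x (ball e r) \<omega> \<noteq> 0} = space M - {\<omega>\<in>space M. count_pts x (ball e r) \<omega> = 0}"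
    by auto
  have em: "emeasure lborel (ball e r) \<le> ennreal (4 * r^2)" using r by (intro ball_meas) simp
  hence "emeasure lborel (ball e r) \<noteq> top" by (auto simp: top_unique)
  hence mb: "measure lborel (ball e r) \<le> 4 * r^2" using em by (simp add: emeasure_eq_ennreal_measure)
  have "measure M {\<omega>\<in>space M. count_pts x (ball e r) \<omega> \<noteq> 0} = 1 - exp (- measure lborel (ball e r))"
    unfolding eq P.prob_compl[OF s0] using count_dist[OF B, of 0] by simp
  also have "\<dots> \<le> measure lborel (ball e r)" using exp_ge_add_one_self[of "- measure lborel (ball e r)"] by simp
  finally show "measure M {\<omega>\<in>space M. count_pts x (ball e r) \<omega> \<noteq> 0} \<le> 4 * r^2" using mb by simp
qed

end


context sett begin

lemma main_eps: assumes e: "\<epsilon> > 0"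
  shows "\<exists>c0>0. \<forall>c lam. 0 < c \<and> c < c0 \<and> lam > 0 \<longrightarrow>
     1 - \<epsilon> \<le> measure M {\<omega>\<in>space M. SIR \<beta> x F lam \<omega> \<ge> ennreal (c / lam powr \<beta>)}"
proof -
  obtain \<delta> where d: "\<delta> > 0" and dF: "\<And>lam. lam > 0 \<Longrightarrow> measure M {\<omega>\<in>space M. F lam 0 \<omega> \<le> \<delta>} \<le> \<epsilon> / 3"
    using delta_exists[of "\<epsilon> / 3"] e by auto
  define r where "r = min 1 (\<epsilon> / 12)"
  have r: "r > 0" "r \<le> 1" "r \<le> \<epsilon> / 12" unfolding r_def using e by auto
  have "r * r \<le> 1 * (\<epsilon> / 12)" using r by (intro mult_mono) auto
  hence r2: "4 * r^2 \<le> \<epsilon> / 3" by (simp add: power2_eq_square)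
  obtain EFr where EF: "(\<integral>\<^sup>+p. ennreal p \<partial>Fd) = ennreal EFr" and EFr: "EFr \<ge> 0"
    using Fd_mean by (auto simp: less_top_ennreal)
  define K where "K = (\<Sum>k. tk \<beta> r k) * EFr"
  have K: "K \<ge> 0" unfolding K_def using EFr
    by (intro mult_nonneg_nonneg suminf_nonneg[OF tk_summable[OF beta r(1)]] tk_nonneg[OF r(1)]) auto
  define c0 where "c0 = \<delta> * \<epsilon> / (3 * (K + 1))"
  have c0: "c0 > 0" unfolding c0_def using d e K by simp
  show ?thesis
  proof (intro exI[of _ c0] conjI allI impI)
    show "c0 > 0" by (rule c0)
    fix c lam :: real assume cl: "0 < c \<and> c < c0 \<and> lam > 0"
    hence c: "c > 0" "c < c0" and lam: "lam > 0" by auto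
    define e where "e = e_pt lam"
    have Fm[measurable]: "\<And>j. F lam j \<in> borel_measurable M" using F_rv lam by blast
    have Sm[measurable]: "\<And>k. Sk r e k \<in> sets borel" by (rule Sk_borel)
    define J where "J \<omega> = (\<Sum>i. ennreal (F lam (Suc i) \<omega>) * gfun \<beta> r e (x i \<omega>))" for \<omega>
    have Jm[measurable]: "J \<in> borel_measurable M" unfolding J_def gfun_def by measurable
    define T where "T = {\<omega>\<in>space M. SIR \<beta> x F lam \<omega> \<ge> ennreal (c / lam powr \<beta>)}"
    have Tm: "T \<in> sets M" unfolding T_def SIR_def interference_def ell_def by measurable
    define B1 where "B1 = {\<omega>\<in>space M. F lam 0 \<omega> \<le> \<delta>}"
    define B2 where "B2 = {\<omega>\<in>space M. count_pts x (ball e r) \<omega> \<noteq> 0}"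
    define B3 where "B3 = {\<omega>\<in>space M. 1 \<le> ennreal (c / \<delta>) * J \<omega>}"
    have B1m: "B1 \<in> sets M" unfolding B1_def by measurable
    have B2m: "B2 \<in> sets M" unfolding B2_def by (rule ball_prob(1)[OF r(1)])
    have B3m: "B3 \<in> sets M" unfolding B3_def by measurable
    have normE: "norm e = lam" unfolding e_def e_pt_def using lam by simp
    have Lpos: "lam powr \<beta> > 0" using lam by simp
    have sub: "space M - T \<subseteq> B1 \<union> B2 \<union> B3"
    proof
      fix \<omega> assume w: "\<omega> \<in> space M - T"
      show "\<omega> \<in> B1 \<union> B2 \<union> B3"
      proof (rule ccontr)
        assume "\<omega> \<notin> B1 \<union> B2 \<union> B3"
        hence F0: "F lam 0 \<omega> > \<delta>" and cnt: "count_pts x (ball e r) \<omega> = 0"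
          and j: "\<not> 1 \<le> ennreal (c / \<delta>) * J \<omega>" using w unfolding B1_def B2_def B3_def by auto
        have ws: "\<omega> \<in> space M" using w by simp
        have fin: "finite (pts x \<omega> \<inter> ball e r)" by (rule loc_fin[OF ws]) simp
        have emp: "pts x \<omega> \<inter> ball e r = {}" using cnt fin unfolding count_pts_def by simp
        have dist: "\<And>i. dist e (x i \<omega>) \<ge> r"
        proof -
          fix i
          have "x i \<omega> \<in> pts x \<omega>" unfolding pts_def by simp
          hence "x i \<omega> \<notin> ball e r" using emp by blast
          thus "dist e (x i \<omega>) \<ge> r" by simp
        qed
        have IJ: "interference \<beta> x (\<lambda>i. F lam (Suc i)) e \<omega> \<le> J \<omega>"
          unfolding J_def by (rule I_le_J[OF r(1) dist])
        have Jlt: "J \<omega> < ennreal (\<delta> / c)"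
        proof (rule ccontr)
          assume "\<not> J \<omega> < ennreal (\<delta> / c)"
          hence "ennreal (\<delta> / c) \<le> J \<omega>" by simp
          hence "ennreal (c / \<delta>) * ennreal (\<delta> / c) \<le> ennreal (c / \<delta>) * J \<omega>" by (rule mult_left_mono) simp
          moreover have "ennreal (c / \<delta>) * ennreal (\<delta> / c) = 1"
            using c d by (simp add: ennreal_mult[symmetric])
          ultimately show False using j by simp
        qed
        have "ennreal (c / lam powr \<beta>) \<le> (ennreal (F lam 0 \<omega>) / ennreal (lam powr \<beta>)) / interference \<beta> x (\<lambda>i. F lam (Suc i)) e \<omega>"
          by (rule SIR_good_aux[OF Lpos c(1) d F0]) (use IJ Jlt in auto)
        hence "\<omega> \<in> T" unfolding T_def SIR_def ell_def using ws normE unfolding e_def by simp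
        thus False using w by simp
      qed
    qed
    have mB3: "measure M B3 \<le> \<epsilon> / 3"
    proof -
      have "emeasure M B3 \<le> ennreal (c / \<delta>) * (\<integral>\<^sup>+\<omega>. J \<omega> * indicator (space M) \<omega> \<partial>M)"
        unfolding B3_def by (rule nn_integral_Markov_inequality) measurable
      also have "(\<integral>\<^sup>+\<omega>. J \<omega> * indicator (space M) \<omega> \<partial>M) = (\<integral>\<^sup>+\<omega>. J \<omega> \<partial>M)"
        by (rule nn_integral_cong) simp
      also have "(\<integral>\<^sup>+\<omega>. J \<omega> \<partial>M) \<le> ennreal K"
        unfolding J_def K_def using EJ[OF lam r(1), of e] EF EFr
        by (simp add: ennreal_mult suminf_nonneg[OF tk_summable[OF beta r(1)] tk_nonneg[OF r(1)]])
      also have "ennreal (c / \<delta>) * ennreal K = ennreal (c / \<delta> * K)"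
        by (rule ennreal_mult'[symmetric]) (use c d in simp)
      also have "c / \<delta> * K \<le> \<epsilon> / 3"
      proof -
        have "c * K \<le> c0 * K" using c K by (intro mult_right_mono) auto
        also have "c0 * K = \<delta> * \<epsilon> / 3 * (K / (K + 1))" unfolding c0_def using K by (simp add: field_simps)
        also have "\<dots> \<le> \<delta> * \<epsilon> / 3 * 1" using K d e by (intro mult_left_mono) auto
        finally have "c * K \<le> \<delta> * \<epsilon> / 3" by simp
        thus ?thesis using d by (simp add: field_simps)
      qed
      hence "ennreal (c / \<delta> * K) \<le> ennreal (\<epsilon> / 3)" by (rule ennreal_leI)
      finally have "emeasure M B3 \<le> ennreal (\<epsilon> / 3)" by (simp add: mult_left_mono)
      thus ?thesis using e by (simp add: P.emeasure_eq_measure)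
    qed
    have mB1: "measure M B1 \<le> \<epsilon> / 3" unfolding B1_def by (rule dF[OF lam])
    have mB2: "measure M B2 \<le> \<epsilon> / 3" unfolding B2_def using ball_prob(2)[OF r(1), of e] r2 by simp
    have "measure M (space M - T) \<le> measure M (B1 \<union> B2 \<union> B3)"
      using sub B1m B2m B3m by (intro P.finite_measure_mono) auto
    also have "\<dots> \<le> measure M (B1 \<union> B2) + measure M B3"
      using B1m B2m B3m by (intro measure_Un_le) auto
    also have "measure M (B1 \<union> B2) \<le> measure M B1 + measure M B2"
      using B1m B2m by (intro measure_Un_le) auto
    finally have "measure M (space M - T) \<le> \<epsilon>" using mB1 mB2 mB3 by simp
    hence "1 - \<epsilon> \<le> measure M T" using P.prob_compl[OF Tm] by simp
    thus "1 - \<epsilon> \<le> measure M {\<omega>\<in>space M. SIR \<beta> x F lam \<omega> \<ge> ennreal (c / lam powr \<beta>)}"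
      unfolding T_def .
  qed
qed

end


theorem theorem3:
  fixes M :: "'w measure"
    and x :: "nat \<Rightarrow> 'w \<Rightarrow> real \<times> real"
    and F :: "real \<Rightarrow> nat \<Rightarrow> 'w \<Rightarrow> real"
    and Fd :: "real measure"
    and \<beta> :: real
  assumes beta: "\<beta> > 2"
    and ppp: "poisson_pp M x"
    and Fd_prob: "prob_space Fd" and Fd_sets: "sets Fd = sets borel"
    and Fd_pos: "AE p in Fd. p > 0"
    and Fd_mean: "(\<integral>\<^sup>+ p. ennreal p \<partial>Fd) < \<infinity>"
    and F_rv: "\<And>lam i. lam > 0 \<Longrightarrow> F lam i \<in> borel_measurable M"
    and F_distr: "\<And>lam i. lam > 0 \<Longrightarrow> distr M borel (F lam i) = Fd"
    and F_indep: "\<And>lam. lam > 0 \<Longrightarrow> prob_space.indep_vars M (\<lambda>_. borel) (F lam) UNIV"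
    and F_indep_Phi: "\<And>lam. lam > 0 \<Longrightarrow>
          indep_rv2 M
            (Pi\<^sub>M UNIV (\<lambda>_. borel)) (\<lambda>\<omega> i. x i \<omega>)
            (Pi\<^sub>M UNIV (\<lambda>_. borel)) (\<lambda>\<omega> i. F lam i \<omega>)"
  shows "Liminf (at_right 0) (\<lambda>c. Liminf at_top (\<lambda>lam.
           ereal (measure M {\<omega> \<in> space M.
              SIR \<beta> x F lam \<omega> \<ge> ennreal (c / lam powr \<beta>)}))) = 1"
proof -
  interpret S: sett M x F Fd \<beta>
    using beta ppp Fd_prob Fd_sets Fd_pos Fd_mean F_rv F_distr F_indep_Phi by (rule sett.intro)
  define P where "P c lam = ereal (measure M {\<omega> \<in> space M. SIR \<beta> x F lam \<omega> \<ge> ennreal (c / lam powr \<beta>)})" for c lam :: real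
  have P1: "P c lam \<le> 1" for c lam unfolding P_def by simp
  have nb1: "(at_top :: real filter) \<noteq> bot" by simp
  have nb2: "at_right (0::real) \<noteq> bot" by simp
  have up: "Liminf (at_right 0) (\<lambda>c. Liminf at_top (P c)) \<le> 1"
  proof (rule Liminf_le_const[OF nb2])
    show "\<forall>\<^sub>F c in at_right 0. Liminf at_top (P c) \<le> 1"
      by (intro always_eventually allI Liminf_le_const[OF nb1]) (simp add: P1)
  qed
  have low: "1 \<le> Liminf (at_right 0) (\<lambda>c. Liminf at_top (P c))"
  proof (rule ereal_le_epsilon2)
    fix \<epsilon> :: real assume e: "\<epsilon> > 0"
    obtain c0 where c0: "c0 > 0" and H: "\<And>c lam. 0 < c \<and> c < c0 \<and> lam > 0 \<Longrightarrow>
        1 - \<epsilon> \<le> measure M {\<omega>\<in>space M. SIR \<beta> x F lam \<omega> \<ge> ennreal (c / lam powr \<beta>)}"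
      using S.main_eps[OF e] by blast
    have "ereal (1 - \<epsilon>) \<le> Liminf (at_right 0) (\<lambda>c. Liminf at_top (P c))"
    proof (rule Liminf_bounded)
      have ev: "\<forall>\<^sub>F c in at_right 0. c \<in> {0<..<c0}" by (rule eventually_at_right_real[OF c0])
      show "\<forall>\<^sub>F c in at_right 0. ereal (1 - \<epsilon>) \<le> Liminf at_top (P c)"
      proof (rule eventually_mono[OF ev])
        fix c :: real assume "c \<in> {0<..<c0}"
        hence cc: "0 < c" "c < c0" by auto
        show "ereal (1 - \<epsilon>) \<le> Liminf at_top (P c)"
        proof (rule Liminf_bounded)
          show "\<forall>\<^sub>F lam in at_top. ereal (1 - \<epsilon>) \<le> P c lam"
            using eventually_gt_at_top[of "0::real"]
            by (rule eventually_mono) (use H cc in \<open>simp add: P_def\<close>)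
        qed
      qed
    qed
    thus "1 \<le> Liminf (at_right 0) (\<lambda>c. Liminf at_top (P c)) + ereal \<epsilon>"
      by (cases "Liminf (at_right 0) (\<lambda>c. Liminf at_top (P c))") auto
  qed
  show ?thesis using up low unfolding P_def by simp
qed

end
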